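(* Let $f=a_1+2a_2+4a_3+8a_4\in\mathcal{GB}_n^{16}$ with $a_1,a_2,a_3,a_4\in\mathcal{B}_n$. Then $f$ is gbent if and only if: (i) when $n$ is even: for all $c_1,c_2,c_3\in\mathbb{F}_2$ the Boolean function $c_1a_1\oplus c_2a_2\oplus c_3a_3\oplus a_4$ is bent, and for all $\mathbf{u}\in\mathbb{F}_2^n$ $$\mathcal{W}_{a_4}(\mathbf{u})\mathcal{W}_{a_2\oplus a_4}(\mathbf{u})=\mathcal{W}_{a_3\oplus a_4}(\mathbf{u})\mathcal{W}_{a_2\oplus a_3\oplus a_4}(\mathbf{u})=\mathcal{W}_{a_1\oplus a_4}(\mathbf{u})\mathcal{W}_{a_1\oplus a_2\oplus a_4}(\mathbf{u})=\mathcal{W}_{a_1\oplus a_3\oplus a_4}(\mathbf{u})\mathcal{W}_{a_1\oplus a_2\oplus a_3\oplus a_4}(\mathbf{u})$$ and $\mathcal{W}_{a_4}(\mathbf{u})\mathcal{W}_{a_3\oplus a_4}(\mathbf{u})=\mathcal{W}_{a_1\oplus a_4}(\mathbf{u})\mathcal{W}_{a_1\oplus a_3\oplus a_4}(\mathbf{u})$; (ii) when $n$ is odd: for all $c_1,c_2,c_3\in\mathbb{F}_2$ the Boolean function $c_1a_1\oplus c_2a_2\oplus c_3a_3\oplus a_4$ is semibent, and for every $\mathbf{u}\in\mathbb{F}_2^n$ one of the following holds: either $\mathcal{W}_{a_4}(\mathbf{u})\mathcal{W}_{a_2\oplus a_4}(\mathbf{u})=\mathcal{W}_{a_1\oplus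 a_4}(\mathbf{u})\mathcal{W}_{a_1\oplus a_2\oplus a_4}(\mathbf{u})=\pm2^{n+1}$ and $\mathcal{W}_{a_3\oplus a_4}(\mathbf{u})=\mathcal{W}_{a_2\oplus a_3\oplus a_4}(\mathbf{u})=\mathcal{W}_{a_1\oplus a_3\oplus a_4}(\mathbf{u})=\mathcal{W}_{a_1\oplus a_2\oplus a_3\oplus a_4}(\mathbf{u})=0$; or $\mathcal{W}_{a_4}(\mathbf{u})=\mathcal{W}_{a_2\oplus a_4}(\mathbf{u})=\mathcal{W}_{a_1\oplus a_4}(\mathbf{u})=\mathcal{W}_{a_1\oplus a_2\oplus a_4}(\mathbf{u})=0$ and $\mathcal{W}_{a_3\oplus a_4}(\mathbf{u})\mathcal{W}_{a_2\oplus a_3\oplus a_4}(\mathbf{u})=\mathcal{W}_{a_1\oplus a_3\oplus a_4}(\mathbf{u})\mathcal{W}_{a_1\oplus a_2\oplus a_3\oplus a_4}(\mathbf{u})=\pm2^{n+1}$.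
   Context: $\mathcal{B}_n$: Boolean functions $\mathbb{F}_2^n\to\mathbb{F}_2$; $\mathcal{GB}_n^q$: functions $\mathbb{F}_2^n\to\mathbb{Z}_q$; in $a_1+2a_2+4a_3+8a_4$ the values $0,1$ are viewed as integers and the sum is taken in $\mathbb{Z}_{16}$, while $\oplus$ is addition in $\mathbb{F}_2$. Walsh–Hadamard transform: $\mathcal{W}_g(\mathbf{u})=\sum_{\mathbf{x}\in\mathbb{F}_2^n}(-1)^{g(\mathbf{x})+\mathbf{u}\cdot\mathbf{x}}$. Generalized Walsh–Hadamard transform: $\mathcal{H}^{(q)}_f(\mathbf{u})=\sum_{\mathbf{x}}\zeta_q^{f(\mathbf{x})}(-1)^{\mathbf{u}\cdot\mathbf{x}}$, $\zeta_q=e^{2\pi i/q}$. $f\in\mathcal{GB}_n^q$ is gbent if $|\mathcal{H}^{(q)}_f(\mathbf{u})|=2^{n/2}$ for all $\mathbf{u}$. $g\in\mathcal{B}_n$ is bent if $|\mathcal{W}_g(\mathbf{u})|=2^{n/2}$ for all $\mathbf{u}$; $g$ is semibent if $|\mathcal{W}_g(\mathbf{u})|\in\{0,2^{(n+1)/2}\}$ for all $\mathbf{u}$ when $n$ is odd, resp. $\{0,2^{(n+2)/2}\}$ when $n$ is even. *)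

theory Defs
  imports Complex_Main
begin

text \<open>The space F_2^n is modelled by boolean lists of length n
  (True = 1, False = 0). Boolean functions in B_n are functions
  bool list => bool, considered on this carrier only.\<close>

definition vecs :: "nat \<Rightarrow> bool list set" where
  "vecs n = {xs. length xs = n}"

definition dotp :: "bool list \<Rightarrow> bool list \<Rightarrow> bool" where
  "dotp u x = odd (card {i. i < length x \<and> u ! i \<and> x ! i})"

definition bxor :: "bool \<Rightarrow> bool \<Rightarrow> bool" where
  "bxor a b = (a \<noteq> b)"

definition walsh :: "nat \<Rightarrow> (bool list \<Rightarrow> bool) \<Rightarrow> bool list \<Rightarrow> real" where
  "walsh n g u = (\<Sum>x\<in>vecs n. (-1) ^ (of_bool (g x) + of_bool (dotp u x)))"

text \<open>Generalized Walsh-Hadamard transform for f : F_2^n -> Z_q,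
  values of f taken as natural numbers representing residues mod q.\<close>
definition gwalsh :: "nat \<Rightarrow> nat \<Rightarrow> (bool list \<Rightarrow> nat) \<Rightarrow> bool list \<Rightarrow> complex" where
  "gwalsh q n f u = (\<Sum>x\<in>vecs n. cis (2 * pi / real q) ^ f x * (-1) ^ of_bool (dotp u x))"

definition gbent :: "nat \<Rightarrow> nat \<Rightarrow> (bool list \<Rightarrow> nat) \<Rightarrow> bool" where
  "gbent q n f = (\<forall>u\<in>vecs n. cmod (gwalsh q n f u) = 2 powr (real n / 2))"

definition bent :: "nat \<Rightarrow> (bool list \<Rightarrow> bool) \<Rightarrow> bool" where
  "bent n g = (\<forall>u\<in>vecs n. \<bar>walsh n g u\<bar> = 2 powr (real n / 2))"

definition semibent :: "nat \<Rightarrow> (bool list \<Rightarrow> bool) \<Rightarrow> bool" where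
  "semibent n g = (\<forall>u\<in>vecs n. \<bar>walsh n g u\<bar> \<in>
     (if odd n then {0, 2 powr ((real n + 1) / 2)} else {0, 2 powr ((real n + 2) / 2)}))"

end

theory Submission
  imports Defs
begin


definition C0 :: "(nat \<Rightarrow> int) \<Rightarrow> int" where
 "C0 v = (v 0)^2 + (v 1)^2 + (v 2)^2 + (v 3)^2 + (v 4)^2 + (v 5)^2 + (v 6)^2 + (v 7)^2"
definition C1 :: "(nat \<Rightarrow> int) \<Rightarrow> int" where
 "C1 v = v 1 * v 0 + v 2 * v 1 + v 3 * v 2 + v 4 * v 3 + v 5 * v 4 + v 6 * v 5 + v 7 * v 6 - v 0 * v 7"
definition C2 :: "(nat \<Rightarrow> int) \<Rightarrow> int" where
 "C2 v = v 2 * v 0 + v 3 * v 1 + v 4 * v 2 + v 5 * v 3 + v 6 * v 4 + v 7 * v 5 - v 0 * v 6 - v 1 * v 7"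
definition C3 :: "(nat \<Rightarrow> int) \<Rightarrow> int" where
 "C3 v = v 3 * v 0 + v 4 * v 1 + v 5 * v 2 + v 6 * v 3 + v 7 * v 4 - v 0 * v 5 - v 1 * v 6 - v 2 * v 7"

definition DD :: "nat \<Rightarrow> (nat \<Rightarrow> int) \<Rightarrow> bool" where
 "DD n v = (C0 v = 2^n \<and> C1 v = 0 \<and> C2 v = 0 \<and> C3 v = 0)"

definition TT :: "(nat \<Rightarrow> int) \<Rightarrow> nat \<Rightarrow> int" where
 "TT v j = (if j < 4 then v j + v (j+4) else v j - v (j-4))"

lemma TT_C: "C0 (TT v) = 2 * C0 v" "C1 (TT v) = 2 * C1 v" "C2 (TT v) = 2 * C2 v" "C3 (TT v) = 2 * C3 v"
  by (simp_all add: C0_def C1_def C2_def C3_def TT_def algebra_simps power2_eq_square)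

lemma parity:
  assumes "even (C0 v)" "even (C1 v)" "even (C2 v)" "even (C3 v)"
  shows "even (v 0 - v 4) \<and> even (v 1 - v 5) \<and> even (v 2 - v 6) \<and> even (v 3 - v 7)"
  using assms unfolding C0_def C1_def C2_def C3_def
  by (simp add: even_add even_mult_iff even_diff) sat

definition X0 :: "(nat \<Rightarrow> int) \<Rightarrow> int" where "X0 v = v 0 + v 1 + v 2 + v 3 + v 4 + v 5 + v 6 + v 7"
definition X1 :: "(nat \<Rightarrow> int) \<Rightarrow> int" where "X1 v = v 0 - v 1 + v 2 - v 3 + v 4 - v 5 + v 6 - v 7"
definition X2 :: "(nat \<Rightarrow> int) \<Rightarrow> int" where "X2 v = v 0 + v 1 - v 2 - v 3 + v 4 + v 5 - v 6 - v 7"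
definition X12 :: "(nat \<Rightarrow> int) \<Rightarrow> int" where "X12 v = v 0 - v 1 - v 2 + v 3 + v 4 - v 5 - v 6 + v 7"
definition X3 :: "(nat \<Rightarrow> int) \<Rightarrow> int" where "X3 v = v 0 + v 1 + v 2 + v 3 - v 4 - v 5 - v 6 - v 7"
definition X13 :: "(nat \<Rightarrow> int) \<Rightarrow> int" where "X13 v = v 0 - v 1 + v 2 - v 3 - v 4 + v 5 - v 6 + v 7"
definition X23 :: "(nat \<Rightarrow> int) \<Rightarrow> int" where "X23 v = v 0 + v 1 - v 2 - v 3 - v 4 - v 5 + v 6 + v 7"
definition X123 :: "(nat \<Rightarrow> int) \<Rightarrow> int" where "X123 v = v 0 - v 1 - v 2 + v 3 - v 4 + v 5 + v 6 - v 7"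
definition Q0 :: "int \<Rightarrow> int \<Rightarrow> int \<Rightarrow> int \<Rightarrow> int \<Rightarrow> int \<Rightarrow> int \<Rightarrow> int \<Rightarrow> int" where
 "Q0 w0 w1 w2 w12 w3 w13 w23 w123 = (8) * w0 * w0 + (8) * w1 * w1 + (8) * w2 * w2 + (8) * w12 * w12 + (8) * w3 * w3 + (8) * w13 * w13 + (8) * w23 * w23 + (8) * w123 * w123"
definition Q1 :: "int \<Rightarrow> int \<Rightarrow> int \<Rightarrow> int \<Rightarrow> int \<Rightarrow> int \<Rightarrow> int \<Rightarrow> int \<Rightarrow> int" where
 "Q1 w0 w1 w2 w12 w3 w13 w23 w123 = (6) * w0 * w0 + (-4) * w0 * w12 + (-4) * w0 * w13 + (-4) * w0 * w23 + (-6) * w1 * w1 + (4) * w1 * w2 + (4) * w1 * w3 + (4) * w1 * w123 + (2) * w2 * w2 + (4) * w2 * w3 + (4) * w2 * w123 + (-2) * w12 * w12 + (-4) * w12 * w13 + (-4) * w12 * w23 + (6) * w3 * w3 + (-4) * w3 * w123 + (-6) * w13 * w13 + (4) * w13 * w23 + (2) * w23 * w23 + (-2) * w123 * w123"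
definition Q2 :: "int \<Rightarrow> int \<Rightarrow> int \<Rightarrow> int \<Rightarrow> int \<Rightarrow> int \<Rightarrow> int \<Rightarrow> int \<Rightarrow> int" where
 "Q2 w0 w1 w2 w12 w3 w13 w23 w123 = (4) * w0 * w0 + (-8) * w0 * w23 + (4) * w1 * w1 + (-8) * w1 * w123 + (-4) * w2 * w2 + (8) * w2 * w3 + (-4) * w12 * w12 + (8) * w12 * w13 + (4) * w3 * w3 + (4) * w13 * w13 + (-4) * w23 * w23 + (-4) * w123 * w123"
definition Q3 :: "int \<Rightarrow> int \<Rightarrow> int \<Rightarrow> int \<Rightarrow> int \<Rightarrow> int \<Rightarrow> int \<Rightarrow> int \<Rightarrow> int" where
 "Q3 w0 w1 w2 w12 w3 w13 w23 w123 = (2) * w0 * w0 + (4) * w0 * w12 + (-4) * w0 * w13 + (-4) * w0 * w23 + (-2) * w1 * w1 + (-4) * w1 * w2 + (4) * w1 * w3 + (4) * w1 * w123 + (-2) * w2 * w2 + (4) * w2 * w3 + (-12) * w2 * w123 + (2) * w12 * w12 + (-4) * w12 * w13 + (12) * w12 * w23 + (2) * w3 * w3 + (4) * w3 * w123 + (-2) * w13 * w13 + (-4) * w13 * w23 + (-2) * w23 * w23 + (2) * w123 * w123"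

lemma Q_ident: "64 * C0 v = Q0 (X0 v) (X1 v) (X2 v) (X12 v) (X3 v) (X13 v) (X23 v) (X123 v)"
  "64 * C1 v = Q1 (X0 v) (X1 v) (X2 v) (X12 v) (X3 v) (X13 v) (X23 v) (X123 v)"
  "64 * C2 v = Q2 (X0 v) (X1 v) (X2 v) (X12 v) (X3 v) (X13 v) (X23 v) (X123 v)"
  "64 * C3 v = Q3 (X0 v) (X1 v) (X2 v) (X12 v) (X3 v) (X13 v) (X23 v) (X123 v)"
  by (simp_all add: C0_def C1_def C2_def C3_def Q0_def Q1_def Q2_def Q3_def
     X0_def X1_def X2_def X12_def X3_def X13_def X23_def X123_def algebra_simps power2_eq_square)

definition vl :: "(nat \<Rightarrow> int) \<Rightarrow> int list" where
 "vl v = [v 0, v 1, v 2, v 3, v 4, v 5, v 6, v 7]"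

definition VE :: "int list list" where
 "VE = [[1,0,0,0,0,0,0,0],[0,1,0,0,0,0,0,0],[0,0,1,0,0,0,0,0],[0,0,0,1,0,0,0,0],
        [0,0,0,0,1,0,0,0],[0,0,0,0,0,1,0,0],[0,0,0,0,0,0,1,0],[0,0,0,0,0,0,0,1],
        [-1,0,0,0,0,0,0,0],[0,-1,0,0,0,0,0,0],[0,0,-1,0,0,0,0,0],[0,0,0,-1,0,0,0,0],
        [0,0,0,0,-1,0,0,0],[0,0,0,0,0,-1,0,0],[0,0,0,0,0,0,-1,0],[0,0,0,0,0,0,0,-1]]"
definition VO :: "int list list" where
 "VO = [[1,0,0,0,1,0,0,0],[0,1,0,0,0,1,0,0],[0,0,1,0,0,0,1,0],[0,0,0,1,0,0,0,1],
        [1,0,0,0,-1,0,0,0],[0,1,0,0,0,-1,0,0],[0,0,1,0,0,0,-1,0],[0,0,0,1,0,0,0,-1],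
        [-1,0,0,0,1,0,0,0],[0,-1,0,0,0,1,0,0],[0,0,-1,0,0,0,1,0],[0,0,0,-1,0,0,0,1],
        [-1,0,0,0,-1,0,0,0],[0,-1,0,0,0,-1,0,0],[0,0,-1,0,0,0,-1,0],[0,0,0,-1,0,0,0,-1]]"

definition GE :: "int \<Rightarrow> (nat \<Rightarrow> int) \<Rightarrow> bool" where
 "GE K v = (\<exists>u\<in>set VE. vl v = map ((*) K) u)"
definition GO :: "int \<Rightarrow> (nat \<Rightarrow> int) \<Rightarrow> bool" where
 "GO K v = (\<exists>u\<in>set VO. vl v = map ((*) K) u)"

lemma GE_step: assumes "GE K w" "K > 0" shows "GO K (TT w)"
proof -
  obtain u where u: "u \<in> set VE" "vl w = map ((*) K) u" using assms(1) unfolding GE_def by blast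
  from u(1) show ?thesis unfolding VE_def
    apply (simp only: set_simps insert_iff empty_iff simp_thms)
    apply (elim disjE)
    using u(2) assms(2) by (simp_all add: vl_def GO_def VO_def TT_def)
qed

lemma GO_step: assumes "GO K w" "K > 0" shows "GE (2*K) (TT w)"
proof -
  obtain u where u: "u \<in> set VO" "vl w = map ((*) K) u" using assms(1) unfolding GO_def by blast
  from u(1) show ?thesis unfolding VO_def
    apply (simp only: set_simps insert_iff empty_iff simp_thms)
    apply (elim disjE)
    using u(2) assms(2) by (simp_all add: vl_def GE_def VE_def TT_def)
qed

lemma sq1: fixes a r :: int assumes "a^2 + r = 1" "r \<ge> 0"
  shows "(a = 0 \<and> r = 1) \<or> (r = 0 \<and> (a = 1 \<or> a = -1))"
proof (cases "a = 0")
  case True then show ?thesis using assms by simp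
next
  case False
  have "1 \<le> \<bar>a\<bar>" using False by auto
  hence "1 \<le> a^2" by (metis one_le_power power2_abs)
  hence r0: "r = 0" "a^2 = 1" using assms by auto
  hence "a = 1 \<or> a = -1" using power2_eq_1_iff by blast
  then show ?thesis using r0 by auto
qed

lemma sq0: fixes a b c d e f g :: int
  assumes "a^2 + b^2 + c^2 + d^2 + e^2 + f^2 + g^2 = 0"
  shows "a = 0 \<and> b = 0 \<and> c = 0 \<and> d = 0 \<and> e = 0 \<and> f = 0 \<and> g = 0"
proof -
  note nn = zero_le_power2[of a] zero_le_power2[of b] zero_le_power2[of c] zero_le_power2[of d]
     zero_le_power2[of e] zero_le_power2[of f] zero_le_power2[of g]
  have "a^2 = 0" "b^2 = 0" "c^2 = 0" "d^2 = 0" "e^2 = 0" "f^2 = 0" "g^2 = 0"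
    using assms nn by linarith+
  thus ?thesis by simp
qed

lemma nn7: fixes a b c d e f g :: int
  shows "0 \<le> a^2 + b^2 + c^2 + d^2 + e^2 + f^2 + g^2"
  by (intro add_nonneg_nonneg zero_le_power2)

lemma base: assumes "C0 v = 1" shows "GE 1 v"
proof -
  have nn: "\<And>x::int. 0 \<le> x^2" by simp
  have A: "\<And>a r::int. a^2 + r = 1 \<Longrightarrow> 0 \<le> r \<Longrightarrow> (a = 0 \<and> r = 1) \<or> (r = 0 \<and> (a = 1 \<or> a = -1))"
    using sq1 by blast
  have e0: "(v 0)^2 + ((v 1)^2 + (v 2)^2 + (v 3)^2 + (v 4)^2 + (v 5)^2 + (v 6)^2 + (v 7)^2) = 1"
    using assms by (simp add: C0_def algebra_simps)
  show ?thesis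
  proof (cases "v 0 = 0")
    case False
    with A[OF e0 nn7] have "v 1 = 0 \<and> v 2 = 0 \<and> v 3 = 0 \<and> v 4 = 0 \<and> v 5 = 0 \<and> v 6 = 0 \<and> v 7 = 0 \<and> (v 0 = 1 \<or> v 0 = -1)"
      by (auto dest!: sq0)
    then show ?thesis by (auto simp: GE_def VE_def vl_def)
  next
    case z0: True
    have e1: "(v 1)^2 + ((v 2)^2 + (v 3)^2 + (v 4)^2 + (v 5)^2 + (v 6)^2 + (v 7)^2 + (v 0)^2) = 1"
      using e0 by (simp add: algebra_simps)
    show ?thesis
    proof (cases "v 1 = 0")
      case False
      with A[OF e1 nn7] have "v 2 = 0 \<and> v 3 = 0 \<and> v 4 = 0 \<and> v 5 = 0 \<and> v 6 = 0 \<and> v 7 = 0 \<and> (v 1 = 1 \<or> v 1 = -1)"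
        by (auto dest!: sq0)
      then show ?thesis using z0 by (auto simp: GE_def VE_def vl_def)
    next
      case z1: True
      have e2: "(v 2)^2 + ((v 3)^2 + (v 4)^2 + (v 5)^2 + (v 6)^2 + (v 7)^2 + (v 0)^2 + (v 1)^2) = 1"
        using e0 by (simp add: algebra_simps)
      show ?thesis
      proof (cases "v 2 = 0")
        case False
        with A[OF e2 nn7] have "v 3 = 0 \<and> v 4 = 0 \<and> v 5 = 0 \<and> v 6 = 0 \<and> v 7 = 0 \<and> (v 2 = 1 \<or> v 2 = -1)"
          by (auto dest!: sq0)
        then show ?thesis using z0 z1 by (auto simp: GE_def VE_def vl_def)
      next
        case z2: True
        have e3: "(v 3)^2 + ((v 4)^2 + (v 5)^2 + (v 6)^2 + (v 7)^2 + (v 0)^2 + (v 1)^2 + (v 2)^2) = 1"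
          using e0 by (simp add: algebra_simps)
        show ?thesis
        proof (cases "v 3 = 0")
          case False
          with A[OF e3 nn7] have "v 4 = 0 \<and> v 5 = 0 \<and> v 6 = 0 \<and> v 7 = 0 \<and> (v 3 = 1 \<or> v 3 = -1)"
            by (auto dest!: sq0)
          then show ?thesis using z0 z1 z2 by (auto simp: GE_def VE_def vl_def)
        next
          case z3: True
          have e4: "(v 4)^2 + ((v 5)^2 + (v 6)^2 + (v 7)^2 + (v 0)^2 + (v 1)^2 + (v 2)^2 + (v 3)^2) = 1"
            using e0 by (simp add: algebra_simps)
          show ?thesis
          proof (cases "v 4 = 0")
            case False
            with A[OF e4 nn7] have "v 5 = 0 \<and> v 6 = 0 \<and> v 7 = 0 \<and> (v 4 = 1 \<or> v 4 = -1)"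
              by (auto dest!: sq0)
            then show ?thesis using z0 z1 z2 z3 by (auto simp: GE_def VE_def vl_def)
          next
            case z4: True
            have e5: "(v 5)^2 + ((v 6)^2 + (v 7)^2 + (v 0)^2 + (v 1)^2 + (v 2)^2 + (v 3)^2 + (v 4)^2) = 1"
              using e0 by (simp add: algebra_simps)
            show ?thesis
            proof (cases "v 5 = 0")
              case False
              with A[OF e5 nn7] have "v 6 = 0 \<and> v 7 = 0 \<and> (v 5 = 1 \<or> v 5 = -1)"
                by (auto dest!: sq0)
              then show ?thesis using z0 z1 z2 z3 z4 by (auto simp: GE_def VE_def vl_def)
            next
              case z5: True
              have e6: "(v 6)^2 + ((v 7)^2 + (v 0)^2 + (v 1)^2 + (v 2)^2 + (v 3)^2 + (v 4)^2 + (v 5)^2) = 1"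
                using e0 by (simp add: algebra_simps)
              show ?thesis
              proof (cases "v 6 = 0")
                case False
                with A[OF e6 nn7] have "v 7 = 0 \<and> (v 6 = 1 \<or> v 6 = -1)"
                  by (auto dest!: sq0)
                then show ?thesis using z0 z1 z2 z3 z4 z5 by (auto simp: GE_def VE_def vl_def)
              next
                case z6: True
                have "(v 7)^2 = 1" using e0 z0 z1 z2 z3 z4 z5 z6 by simp
                hence "v 7 = 1 \<or> v 7 = -1" using power2_eq_1_iff by blast
                then show ?thesis using z0 z1 z2 z3 z4 z5 z6 by (auto simp: GE_def VE_def vl_def)
              qed
            qed
          qed
        qed
      qed
    qed
  qed
qed

definition Good :: "nat \<Rightarrow> (nat \<Rightarrow> int) \<Rightarrow> bool" where
 "Good n v = (if even n then GE (2^(n div 2)) v else GO (2^(n div 2)) v)"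

lemma GE_cong: "GE K v \<Longrightarrow> (\<And>j. j < 8 \<Longrightarrow> w j = v j) \<Longrightarrow> GE K w"
  unfolding GE_def vl_def by simp
lemma GO_cong: "GO K v \<Longrightarrow> (\<And>j. j < 8 \<Longrightarrow> w j = v j) \<Longrightarrow> GO K w"
  unfolding GO_def vl_def by simp

lemma classify: "DD n v \<Longrightarrow> Good n v"
proof (induction n arbitrary: v)
  case 0
  then show ?case using base by (simp add: DD_def Good_def)
next
  case (Suc n)
  have ev: "even (C0 v)" "even (C1 v)" "even (C2 v)" "even (C3 v)"
    using Suc.prems by (auto simp: DD_def)
  note par = parity[OF ev]
  define w where "w = (\<lambda>j. if j < 4 then (v j - v (j+4)) div 2 else (v (j-4) + v j) div 2)"
  have vw: "\<And>j. j < 8 \<Longrightarrow> TT w j = v j"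
  proof -
    fix j :: nat assume "j < 8"
    then consider "j=0"|"j=1"|"j=2"|"j=3"|"j=4"|"j=5"|"j=6"|"j=7" by linarith
    then show "TT w j = v j" using par
      by cases (auto simp: TT_def w_def elim!: evenE, presburger+)
  qed
  have Cw: "C0 (TT w) = C0 v" "C1 (TT w) = C1 v" "C2 (TT w) = C2 v" "C3 (TT w) = C3 v"
    by (simp_all add: C0_def C1_def C2_def C3_def vw)
  have "DD n w" using Suc.prems TT_C[of w] Cw by (auto simp: DD_def)
  hence G: "Good n w" by (rule Suc.IH)
  show ?case
  proof (cases "even n")
    case True
    hence "GE (2^(n div 2)) w" using G by (simp add: Good_def)
    hence "GO (2^(n div 2)) (TT w)" by (rule GE_step) simp
    hence "GO (2^(n div 2)) v" by (rule GO_cong) (simp add: vw)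
    moreover have "Suc n div 2 = n div 2" using True by presburger
    ultimately show ?thesis using True by (simp add: Good_def)
  next
    case False
    hence "GO (2^(n div 2)) w" using G by (simp add: Good_def)
    hence "GE (2 * 2^(n div 2)) (TT w)" by (rule GO_step) simp
    hence "GE (2 * 2^(n div 2)) v" by (rule GE_cong) (simp add: vw)
    moreover have "Suc n div 2 = Suc (n div 2)" using False by presburger
    ultimately show ?thesis using False by (simp add: Good_def)
  qed
qed


definition EvenR :: "int \<Rightarrow> (nat \<Rightarrow> int) \<Rightarrow> bool" where
 "EvenR K v = (\<bar>X0 v\<bar> = K \<and> \<bar>X1 v\<bar> = K \<and> \<bar>X2 v\<bar> = K \<and> \<bar>X12 v\<bar> = K \<and>
    \<bar>X3 v\<bar> = K \<and> \<bar>X13 v\<bar> = K \<and> \<bar>X23 v\<bar> = K \<and> \<bar>X123 v\<bar> = K \<and>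
    X0 v * X2 v = X3 v * X23 v \<and> X3 v * X23 v = X1 v * X12 v \<and>
    X1 v * X12 v = X13 v * X123 v \<and> X0 v * X3 v = X1 v * X13 v)"

definition OddR :: "int \<Rightarrow> (nat \<Rightarrow> int) \<Rightarrow> bool" where
 "OddR K v = ((\<bar>X0 v\<bar> = 0 \<or> \<bar>X0 v\<bar> = 2*K) \<and> (\<bar>X1 v\<bar> = 0 \<or> \<bar>X1 v\<bar> = 2*K) \<and>
    (\<bar>X2 v\<bar> = 0 \<or> \<bar>X2 v\<bar> = 2*K) \<and> (\<bar>X12 v\<bar> = 0 \<or> \<bar>X12 v\<bar> = 2*K) \<and>
    (\<bar>X3 v\<bar> = 0 \<or> \<bar>X3 v\<bar> = 2*K) \<and> (\<bar>X13 v\<bar> = 0 \<or> \<bar>X13 v\<bar> = 2*K) \<and>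
    (\<bar>X23 v\<bar> = 0 \<or> \<bar>X23 v\<bar> = 2*K) \<and> (\<bar>X123 v\<bar> = 0 \<or> \<bar>X123 v\<bar> = 2*K) \<and>
    ((X0 v * X2 v = X1 v * X12 v \<and> (X0 v * X2 v = 4*K^2 \<or> X0 v * X2 v = -(4*K^2)) \<and>
      X3 v = 0 \<and> X23 v = 0 \<and> X13 v = 0 \<and> X123 v = 0) \<or>
     (X0 v = 0 \<and> X2 v = 0 \<and> X1 v = 0 \<and> X12 v = 0 \<and> X3 v * X23 v = X13 v * X123 v \<and>
      (X3 v * X23 v = 4*K^2 \<or> X3 v * X23 v = -(4*K^2)))))"

lemma Ev_fwd: assumes "GE K v" "K > 0" shows "EvenR K v"
proof -
  obtain u where u: "u \<in> set VE" "vl v = map ((*) K) u" using assms(1) unfolding GE_def by blast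
  from u(1) show ?thesis unfolding VE_def
    apply (simp only: set_simps insert_iff empty_iff simp_thms)
    apply (elim disjE)
    using u(2) assms(2) by (simp_all add: vl_def EvenR_def X0_def X1_def X2_def X12_def X3_def X13_def X23_def X123_def)
qed

lemma Od_fwd: assumes "GO K v" "K > 0" shows "OddR K v"
proof -
  obtain u where u: "u \<in> set VO" "vl v = map ((*) K) u" using assms(1) unfolding GO_def by blast
  from u(1) show ?thesis unfolding VO_def
    apply (simp only: set_simps insert_iff empty_iff simp_thms)
    apply (elim disjE)
    using u(2) assms(2) by (simp_all add: vl_def OddR_def X0_def X1_def X2_def X12_def X3_def X13_def X23_def X123_def power2_eq_square abs_mult)
qed




lemma Qeven: fixes w0 w1 w2 w12 w3 w13 w23 w123 K :: int
  assumes "K > 0" "\<bar>w0\<bar> = K" "\<bar>w1\<bar> = K" "\<bar>w2\<bar> = K" "\<bar>w12\<bar> = K" "\<bar>w3\<bar> = K" "\<bar>w13\<bar> = K" "\<bar>w23\<bar> = K" "\<bar>w123\<bar> = K"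
   "w0 * w2 = w3 * w23" "w3 * w23 = w1 * w12" "w1 * w12 = w13 * w123" "w0 * w3 = w1 * w13"
  shows "Q0 w0 w1 w2 w12 w3 w13 w23 w123 = 64 * K^2 \<and> Q1 w0 w1 w2 w12 w3 w13 w23 w123 = 0 \<and>
         Q2 w0 w1 w2 w12 w3 w13 w23 w123 = 0 \<and> Q3 w0 w1 w2 w12 w3 w13 w23 w123 = 0"
proof -
  have s: "\<And>x. \<bar>x\<bar> = K \<Longrightarrow> x = K \<or> x = -K" by auto
  have Kn: "K \<noteq> 0" using assms by simp
  from s[OF assms(2)] s[OF assms(3)] s[OF assms(4)] s[OF assms(6)]
     s[OF assms(5)] s[OF assms(7)] s[OF assms(8)] s[OF assms(9)]
  show ?thesis using assms(10-13) Kn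
    by (elim disjE) (simp_all add: Q0_def Q1_def Q2_def Q3_def power2_eq_square)
qed

lemma Qodd1: fixes w0 w1 w2 w12 K :: int
  assumes "K > 0" "\<bar>w0\<bar> = 0 \<or> \<bar>w0\<bar> = 2*K" "\<bar>w1\<bar> = 0 \<or> \<bar>w1\<bar> = 2*K"
    "\<bar>w2\<bar> = 0 \<or> \<bar>w2\<bar> = 2*K" "\<bar>w12\<bar> = 0 \<or> \<bar>w12\<bar> = 2*K"
    "w0 * w2 = w1 * w12" "w0 * w2 = 4*K^2 \<or> w0 * w2 = -(4*K^2)"
  shows "Q0 w0 w1 w2 w12 0 0 0 0 = 128 * K^2 \<and> Q1 w0 w1 w2 w12 0 0 0 0 = 0 \<and>
         Q2 w0 w1 w2 w12 0 0 0 0 = 0 \<and> Q3 w0 w1 w2 w12 0 0 0 0 = 0"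
proof -
  have s: "\<And>x. \<bar>x\<bar> = 0 \<or> \<bar>x\<bar> = 2*K \<Longrightarrow> x = 0 \<or> x = 2*K \<or> x = -(2*K)" by auto
  have Kn: "K \<noteq> 0" using assms by simp
  from s[OF assms(2)] s[OF assms(3)] s[OF assms(4)] s[OF assms(5)]
  show ?thesis using assms(6,7) Kn
    by (elim disjE) (simp_all add: Q0_def Q1_def Q2_def Q3_def power2_eq_square)
qed

lemma Qodd2: fixes w3 w13 w23 w123 K :: int
  assumes "K > 0" "\<bar>w3\<bar> = 0 \<or> \<bar>w3\<bar> = 2*K" "\<bar>w13\<bar> = 0 \<or> \<bar>w13\<bar> = 2*K"
    "\<bar>w23\<bar> = 0 \<or> \<bar>w23\<bar> = 2*K" "\<bar>w123\<bar> = 0 \<or> \<bar>w123\<bar> = 2*K"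
    "w3 * w23 = w13 * w123" "w3 * w23 = 4*K^2 \<or> w3 * w23 = -(4*K^2)"
  shows "Q0 0 0 0 0 w3 w13 w23 w123 = 128 * K^2 \<and> Q1 0 0 0 0 w3 w13 w23 w123 = 0 \<and>
         Q2 0 0 0 0 w3 w13 w23 w123 = 0 \<and> Q3 0 0 0 0 w3 w13 w23 w123 = 0"
proof -
  have s: "\<And>x. \<bar>x\<bar> = 0 \<or> \<bar>x\<bar> = 2*K \<Longrightarrow> x = 0 \<or> x = 2*K \<or> x = -(2*K)" by auto
  have Kn: "K \<noteq> 0" using assms by simp
  from s[OF assms(2)] s[OF assms(3)] s[OF assms(4)] s[OF assms(5)]
  show ?thesis using assms(6,7) Kn
    by (elim disjE) (simp_all add: Q0_def Q1_def Q2_def Q3_def power2_eq_square)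
qed

lemma Ev_bwd: assumes "EvenR K v" "K > 0"
  shows "C0 v = K^2 \<and> C1 v = 0 \<and> C2 v = 0 \<and> C3 v = 0"
proof -
  have "Q0 (X0 v) (X1 v) (X2 v) (X12 v) (X3 v) (X13 v) (X23 v) (X123 v) = 64 * K^2 \<and>
        Q1 (X0 v) (X1 v) (X2 v) (X12 v) (X3 v) (X13 v) (X23 v) (X123 v) = 0 \<and>
        Q2 (X0 v) (X1 v) (X2 v) (X12 v) (X3 v) (X13 v) (X23 v) (X123 v) = 0 \<and>
        Q3 (X0 v) (X1 v) (X2 v) (X12 v) (X3 v) (X13 v) (X23 v) (X123 v) = 0"
    using assms unfolding EvenR_def by (intro Qeven) auto
  thus ?thesis using Q_ident[of v] by simp
qed

lemma Od_bwd: assumes "OddR K v" "K > 0"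
  shows "C0 v = 2 * K^2 \<and> C1 v = 0 \<and> C2 v = 0 \<and> C3 v = 0"
proof -
  have "Q0 (X0 v) (X1 v) (X2 v) (X12 v) (X3 v) (X13 v) (X23 v) (X123 v) = 128 * K^2 \<and>
        Q1 (X0 v) (X1 v) (X2 v) (X12 v) (X3 v) (X13 v) (X23 v) (X123 v) = 0 \<and>
        Q2 (X0 v) (X1 v) (X2 v) (X12 v) (X3 v) (X13 v) (X23 v) (X123 v) = 0 \<and>
        Q3 (X0 v) (X1 v) (X2 v) (X12 v) (X3 v) (X13 v) (X23 v) (X123 v) = 0"
  proof (cases "X3 v = 0 \<and> X23 v = 0 \<and> X13 v = 0 \<and> X123 v = 0")
    case True
    have o: "\<bar>X0 v\<bar> = 0 \<or> \<bar>X0 v\<bar> = 2*K" "\<bar>X1 v\<bar> = 0 \<or> \<bar>X1 v\<bar> = 2*K"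
      "\<bar>X2 v\<bar> = 0 \<or> \<bar>X2 v\<bar> = 2*K" "\<bar>X12 v\<bar> = 0 \<or> \<bar>X12 v\<bar> = 2*K"
      using assms(1) unfolding OddR_def by blast+
    have r: "X0 v * X2 v = X1 v * X12 v" "X0 v * X2 v = 4*K^2 \<or> X0 v * X2 v = -(4*K^2)"
    proof -
      have "\<not> (X0 v = 0 \<and> X2 v = 0 \<and> X1 v = 0 \<and> X12 v = 0 \<and> X3 v * X23 v = X13 v * X123 v \<and>
          (X3 v * X23 v = 4*K^2 \<or> X3 v * X23 v = -(4*K^2)))" using True assms(2) by auto
      then show "X0 v * X2 v = X1 v * X12 v" "X0 v * X2 v = 4*K^2 \<or> X0 v * X2 v = -(4*K^2)"
        using assms(1) unfolding OddR_def by blast+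
    qed
    show ?thesis using Qodd1[OF assms(2) o r] True by simp
  next
    case False
    have o: "\<bar>X3 v\<bar> = 0 \<or> \<bar>X3 v\<bar> = 2*K" "\<bar>X13 v\<bar> = 0 \<or> \<bar>X13 v\<bar> = 2*K"
      "\<bar>X23 v\<bar> = 0 \<or> \<bar>X23 v\<bar> = 2*K" "\<bar>X123 v\<bar> = 0 \<or> \<bar>X123 v\<bar> = 2*K"
      using assms(1) unfolding OddR_def by blast+
    have r: "X0 v = 0" "X2 v = 0" "X1 v = 0" "X12 v = 0" "X3 v * X23 v = X13 v * X123 v"
       "X3 v * X23 v = 4*K^2 \<or> X3 v * X23 v = -(4*K^2)"
      using assms(1) False unfolding OddR_def by blast+
    show ?thesis using Qodd2[OF assms(2) o r(5,6)] r(1-4) by simp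
  qed
  thus ?thesis using Q_ident[of v] by simp
qed

lemma DD_even: assumes "even n" shows "DD n v \<longleftrightarrow> EvenR (2^(n div 2)) v"
proof
  assume "DD n v"
  hence "Good n v" by (rule classify)
  thus "EvenR (2^(n div 2)) v" using assms by (simp add: Good_def Ev_fwd)
next
  assume "EvenR (2^(n div 2)) v"
  hence "C0 v = (2^(n div 2))^2 \<and> C1 v = 0 \<and> C2 v = 0 \<and> C3 v = 0" by (rule Ev_bwd) simp
  moreover have "((2::int)^(n div 2))^2 = 2^n" using assms by (simp add: power_mult[symmetric])
  ultimately show "DD n v" by (simp add: DD_def)
qed

lemma DD_odd: assumes "odd n" shows "DD n v \<longleftrightarrow> OddR (2^(n div 2)) v"
proof
  assume "DD n v"
  hence "Good n v" by (rule classify)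
  thus "OddR (2^(n div 2)) v" using assms by (simp add: Good_def Od_fwd)
next
  assume "OddR (2^(n div 2)) v"
  hence "C0 v = 2 * (2^(n div 2))^2 \<and> C1 v = 0 \<and> C2 v = 0 \<and> C3 v = 0" by (rule Od_bwd) simp
  moreover have "2 * ((2::int)^(n div 2))^2 = 2^n" using assms
  proof -
    obtain k where k: "n = 2*k+1" using assms oddE by blast
    hence "n div 2 = k" by simp
    thus ?thesis using k by (simp add: power_add power_mult[symmetric] mult.commute)
  qed
  ultimately show "DD n v" by (simp add: DD_def)
qed




lemma two_sq_nat: "(k::nat)^2 = 2 * j^2 \<Longrightarrow> j = 0"
proof (induction j arbitrary: k rule: less_induct)
  case (less j)
  show ?case
  proof (rule ccontr)
    assume j0: "j \<noteq> 0"
    have "even (k^2)" using less.prems by simp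
    hence "even k" by simp
    then obtain k' where k': "k = 2*k'" by blast
    hence "j^2 = 2 * k'^2" using less.prems by (simp add: power_mult_distrib)
    hence "even (j^2)" by simp
    hence "even j" by simp
    then obtain j' where j': "j = 2*j'" by blast
    hence "k'^2 = 2 * j'^2" using \<open>j^2 = 2 * k'^2\<close> by (simp add: power_mult_distrib)
    moreover have "j' < j" using j' j0 by simp
    ultimately have "j' = 0" using less.IH by blast
    thus False using j' j0 by simp
  qed
qed

lemma two_sq_int: "(k::int)^2 = 2 * j^2 \<Longrightarrow> j = 0"
proof -
  assume h: "k^2 = 2 * j^2"
  have "(nat \<bar>k\<bar>)^2 = 2 * (nat \<bar>j\<bar>)^2"
  proof -
    have "int ((nat \<bar>k\<bar>)^2) = int (2 * (nat \<bar>j\<bar>)^2)" using h by simp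
    thus ?thesis by (simp only: of_nat_eq_iff)
  qed
  hence "nat \<bar>j\<bar> = 0" by (rule two_sq_nat)
  thus "j = 0" by simp
qed

lemma irr2: fixes x y :: int assumes "real_of_int x + real_of_int y * sqrt 2 = 0" shows "x = 0 \<and> y = 0"
proof -
  have "real_of_int x = - (real_of_int y * sqrt 2)" using assms by linarith
  hence "(real_of_int x)^2 = (real_of_int y)^2 * 2" by (simp add: power_mult_distrib)
  hence "real_of_int (x^2) = real_of_int (2 * y^2)" by simp
  hence "x^2 = 2 * y^2" by (simp only: of_int_eq_iff)
  hence "y = 0" by (rule two_sq_int)
  thus ?thesis using assms by simp
qed

lemma lemK: fixes u v a c :: int
  assumes "(u + v * sqrt 2)^2 = (a + c * sqrt 2)^2 * (2 + sqrt 2)"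
  shows "a = 0 \<and> c = 0"
proof -
  have s2: "sqrt 2 ^ 2 = 2" by simp
  have "real_of_int (u^2 + 2*v^2 - (2*a^2 + 4*c^2 + 4*a*c)) + real_of_int (2*u*v - (a^2 + 2*c^2 + 4*a*c)) * sqrt 2 = 0"
    using assms by (simp add: algebra_simps power2_eq_square)
  from irr2[OF this] have e: "u^2 + 2*v^2 = 2*a^2 + 4*c^2 + 4*a*c" "2*u*v = a^2 + 2*c^2 + 4*a*c"
    by auto
  have "(u^2 - 2*v^2)^2 = (u^2 + 2*v^2)^2 - 2*(2*u*v)^2" by (simp add: algebra_simps power2_eq_square)
  also have "\<dots> = 2 * (a^2 - 2*c^2)^2" unfolding e by (simp add: algebra_simps power2_eq_square)
  finally have "a^2 - 2*c^2 = 0" by (rule two_sq_int)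
  hence "a^2 = 2 * c^2" by simp
  hence "c = 0" by (rule two_sq_int)
  thus ?thesis using \<open>a^2 = 2 * c^2\<close> by simp
qed

lemma LI: fixes y :: real and al be ga de :: int
  assumes y2: "y^2 = 2 + sqrt 2" and h: "al + be * y + ga * y^2 + de * y^3 = 0"
  shows "al = 0 \<and> be = 0 \<and> ga = 0 \<and> de = 0"
proof -
  define A where "A = real_of_int (al + 2*ga) + real_of_int ga * sqrt 2"
  define B where "B = real_of_int (be + 2*de) + real_of_int de * sqrt 2"
  have y3: "y^3 = (2 + sqrt 2) * y" using y2 by (simp add: power3_eq_cube power2_eq_square)
  have "A + y * B = 0" using h unfolding A_def B_def y3 y2 by (simp add: algebra_simps)
  hence "A = - (y * B)" by linarith
  hence "A^2 = B^2 * (2 + sqrt 2)" by (simp add: power_mult_distrib y2)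
  hence "be + 2*de = 0 \<and> de = 0" unfolding A_def B_def by (rule lemK)
  hence bd: "be = 0" "de = 0" by auto
  hence "B = 0" unfolding B_def by simp
  hence "A = 0" using \<open>A + y * B = 0\<close> by simp
  hence "al + 2*ga = 0 \<and> ga = 0" unfolding A_def by (intro irr2) simp
  thus ?thesis using bd by auto
qed


definition zz :: complex where "zz = cis (pi/8)"
definition HH :: "(nat \<Rightarrow> int) \<Rightarrow> complex" where "HH v = (\<Sum>j<8. of_int (v j) * zz^j)"
definition yy :: real where "yy = 2 * cos (pi/8)"

lemma GENalg: fixes z w t a0 a1 a2 a3 a4 a5 a6 a7 :: complex
  assumes "z * w = 1" "z^4 + w^4 = 0" "z + w = t"
  shows "(a0 + a1*z + a2*z^2 + a3*z^3 + a4*z^4 + a5*z^5 + a6*z^6 + a7*z^7) *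
  (a0 + a1*w + a2*w^2 + a3*w^3 + a4*w^4 + a5*w^5 + a6*w^6 + a7*w^7) =
  (a0^2+a1^2+a2^2+a3^2+a4^2+a5^2+a6^2+a7^2)
  + (a1*a0 + a2*a1 + a3*a2 + a4*a3 + a5*a4 + a6*a5 + a7*a6 - a0*a7) * t
  + (a2*a0 + a3*a1 + a4*a2 + a5*a3 + a6*a4 + a7*a5 - a0*a6 - a1*a7) * (t^2 - 2)
  + (a3*a0 + a4*a1 + a5*a2 + a6*a3 + a7*a4 - a0*a5 - a1*a6 - a2*a7) * (t^3 - 3*t)"
  using assms by algebra

lemma yy2: "yy^2 = 2 + sqrt 2"
proof -
  have "cos (2 * (pi/8)) = 2 * cos (pi/8) ^ 2 - 1" by (rule cos_double_cos)
  moreover have "2 * (pi/8) = pi/4" by simp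
  ultimately have "2 * cos (pi/8) ^ 2 - 1 = sqrt 2 / 2" using cos_45 by simp
  thus ?thesis unfolding yy_def by (simp add: power_mult_distrib) 
qed

lemma HH_norm: "(cmod (HH v))^2 = real_of_int (C0 v) + real_of_int (C1 v) * yy + real_of_int (C2 v) * (yy^2 - 2) + real_of_int (C3 v) * (yy^3 - 3*yy)"
proof -
  let ?w = "cnj zz"
  have zw: "zz * ?w = 1" unfolding zz_def by (simp add: cis_cnj cis_mult)
  have z4: "zz^4 = \<i>" unfolding zz_def DeMoivre by simp
  have z4': "zz^4 + ?w^4 = 0" by (simp add: z4 flip: complex_cnj_power)
  have t: "zz + ?w = complex_of_real yy" unfolding zz_def yy_def by (simp add: complex_eq_iff)
  have H: "HH v = of_int (v 0) + of_int (v 1) * zz + of_int (v 2) * zz^2 + of_int (v 3) * zz^3 +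
      of_int (v 4) * zz^4 + of_int (v 5) * zz^5 + of_int (v 6) * zz^6 + of_int (v 7) * zz^7"
    unfolding HH_def by (simp add: eval_nat_numeral lessThan_Suc)
  have Hc: "cnj (HH v) = of_int (v 0) + of_int (v 1) * ?w + of_int (v 2) * ?w^2 + of_int (v 3) * ?w^3 +
      of_int (v 4) * ?w^4 + of_int (v 5) * ?w^5 + of_int (v 6) * ?w^6 + of_int (v 7) * ?w^7"
    unfolding H by simp
  have "complex_of_real ((cmod (HH v))^2) = HH v * cnj (HH v)" by (rule complex_norm_square)
  also have "\<dots> = complex_of_real (real_of_int (C0 v) + real_of_int (C1 v) * yy + real_of_int (C2 v) * (yy^2 - 2) + real_of_int (C3 v) * (yy^3 - 3*yy))"
    unfolding Hc apply (subst H) apply (subst GENalg[OF zw z4' t])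
    by (simp add: C0_def C1_def C2_def C3_def)
  finally show ?thesis by (simp only: of_real_eq_iff)
qed

lemma HH_DD: "cmod (HH v) = 2 powr (real n / 2) \<longleftrightarrow> DD n v"
proof -
  have p: "(2 powr (real n / 2))^2 = 2^n"
  proof -
    have "(2 powr (real n / 2))^2 = 2 powr (real n / 2) * 2 powr (real n / 2)" by (simp add: power2_eq_square)
    also have "\<dots> = 2 powr (real n)" by (simp add: powr_add[symmetric])
    also have "\<dots> = 2^n" by (simp add: powr_realpow)
    finally show ?thesis .
  qed
  have "cmod (HH v) = 2 powr (real n / 2) \<longleftrightarrow> (cmod (HH v))^2 = 2^n"
  proof
    assume "(cmod (HH v))^2 = 2^n"
    hence "(cmod (HH v))^2 = (2 powr (real n / 2))^2" using p by simp
    thus "cmod (HH v) = 2 powr (real n / 2)" by (simp add: power2_eq_iff_nonneg)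
  qed (simp add: p)
  also have "\<dots> \<longleftrightarrow> real_of_int (C0 v - 2^n - 2 * C2 v) + real_of_int (C1 v - 3 * C3 v) * yy
        + real_of_int (C2 v) * yy^2 + real_of_int (C3 v) * yy^3 = 0"
    unfolding HH_norm by (simp add: algebra_simps)
  also have "\<dots> \<longleftrightarrow> DD n v"
  proof
    assume "real_of_int (C0 v - 2^n - 2 * C2 v) + real_of_int (C1 v - 3 * C3 v) * yy
        + real_of_int (C2 v) * yy^2 + real_of_int (C3 v) * yy^3 = 0"
    from LI[OF yy2 this] show "DD n v" by (simp add: DD_def)
  qed (simp add: DD_def)
  finally show ?thesis .
qed




lemma finite_vecs: "finite (vecs n)"
proof -
  have "vecs n = {xs. set xs \<subseteq> (UNIV::bool set) \<and> length xs = n}" unfolding vecs_def by auto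
  thus ?thesis using finite_lists_length_eq[OF finite_UNIV] by simp
qed

lemma regroup:
  fixes h :: "nat \<Rightarrow> 'a::comm_ring_1" and s :: "'b \<Rightarrow> int"
  assumes "finite S" "\<And>x. x \<in> S \<Longrightarrow> j x < 8"
  shows "(\<Sum>x\<in>S. h (j x) * of_int (s x)) = (\<Sum>k<8. h k * of_int (\<Sum>x\<in>S. if j x = k then s x else 0))"
proof -
  have "(\<Sum>k<8. h k * of_int (\<Sum>x\<in>S. if j x = k then s x else 0))
      = (\<Sum>k<8. \<Sum>x\<in>S. if j x = k then h k * of_int (s x) else 0)"
    by (simp add: sum_distrib_left of_int_sum if_distrib cong: if_cong)
  also have "\<dots> = (\<Sum>x\<in>S. \<Sum>k<8. if j x = k then h k * of_int (s x) else 0)"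
    by (rule sum.swap)
  also have "\<dots> = (\<Sum>x\<in>S. h (j x) * of_int (s x))"
    using assms(2) by (intro sum.cong) auto
  finally show ?thesis by simp
qed

definition jj :: "(bool list \<Rightarrow> bool) \<Rightarrow> (bool list \<Rightarrow> bool) \<Rightarrow> (bool list \<Rightarrow> bool) \<Rightarrow> bool list \<Rightarrow> nat" where
  "jj a1 a2 a3 x = of_bool (a1 x) + 2 * of_bool (a2 x) + 4 * of_bool (a3 x)"
definition sg :: "(bool list \<Rightarrow> bool) \<Rightarrow> bool list \<Rightarrow> bool list \<Rightarrow> int" where
  "sg a4 u x = (-1) ^ (of_bool (a4 x) + of_bool (dotp u x))"
definition MM :: "nat \<Rightarrow> (bool list \<Rightarrow> bool) \<Rightarrow> (bool list \<Rightarrow> bool) \<Rightarrow> (bool list \<Rightarrow> bool) \<Rightarrow> (bool list \<Rightarrow> bool) \<Rightarrow> bool list \<Rightarrow> nat \<Rightarrow> int" where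
  "MM n a1 a2 a3 a4 u k = (\<Sum>x\<in>vecs n. if jj a1 a2 a3 x = k then sg a4 u x else 0)"

lemma jj_lt: "jj a1 a2 a3 x < 8" by (simp add: jj_def)

lemma zz8: "zz^8 = -1" unfolding zz_def DeMoivre by simp

lemma gw_MM:
  fixes a1 a2 a3 a4 :: "bool list \<Rightarrow> bool"
  defines "f \<equiv> (\<lambda>x. (of_bool (a1 x) + 2 * of_bool (a2 x) + 4 * of_bool (a3 x) + 8 * of_bool (a4 x)) mod 16 :: nat)"
  shows "gwalsh 16 n f u = HH (MM n a1 a2 a3 a4 u)"
proof -
  have fx: "f x = jj a1 a2 a3 x + 8 * of_bool (a4 x)" for x
    unfolding f_def jj_def by (cases "a1 x"; cases "a2 x"; cases "a3 x"; cases "a4 x") simp_all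
  have c: "cis (2 * pi / real 16) = zz" unfolding zz_def by simp
  have tm: "cis (2 * pi / real 16) ^ f x * (-1) ^ of_bool (dotp u x) = zz ^ (jj a1 a2 a3 x) * of_int (sg a4 u x)" for x
  proof -
    have "cis (2 * pi / real 16) ^ f x = zz ^ (jj a1 a2 a3 x) * (zz^8) ^ of_bool (a4 x)"
      unfolding c fx by (simp add: power_add power_mult)
    thus ?thesis unfolding sg_def zz8 by (simp add: power_add)
  qed
  have "gwalsh 16 n f u = (\<Sum>x\<in>vecs n. zz ^ (jj a1 a2 a3 x) * of_int (sg a4 u x))"
    unfolding gwalsh_def using tm by simp
  also have "\<dots> = (\<Sum>k<8. zz^k * of_int (MM n a1 a2 a3 a4 u k))"
    unfolding MM_def by (rule regroup[OF finite_vecs jj_lt])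
  finally show ?thesis unfolding HH_def by (simp add: mult.commute)
qed

lemma w_MM:
  fixes G :: "bool \<Rightarrow> bool \<Rightarrow> bool \<Rightarrow> bool"
  shows "walsh n (\<lambda>x. bxor (G (pa x) (pb x) (pc x)) (pd x)) u =
    (\<Sum>k<8. (if G (odd k) (odd (k div 2)) (odd (k div 4)) then -1 else 1) * real_of_int (MM n pa pb pc pd u k))"
proof -
  let ?h = "\<lambda>k::nat. (if G (odd k) (odd (k div 2)) (odd (k div 4)) then -1 else 1::real)"
  have tm: "(-1::real) ^ (of_bool (bxor (G (pa x) (pb x) (pc x)) (pd x)) + of_bool (dotp u x))
      = ?h (jj pa pb pc x) * of_int (sg pd u x)" for x
    unfolding jj_def sg_def bxor_def
    by (cases "pa x"; cases "pb x"; cases "pc x"; cases "pd x"; cases "dotp u x"; cases "G (pa x) (pb x) (pc x)") simp_all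
  have "walsh n (\<lambda>x. bxor (G (pa x) (pb x) (pc x)) (pd x)) u = (\<Sum>x\<in>vecs n. ?h (jj pa pb pc x) * of_int (sg pd u x))"
    unfolding walsh_def using tm by simp
  also have "\<dots> = (\<Sum>k<8. ?h k * of_int (MM n pa pb pc pd u k))"
    unfolding MM_def by (rule regroup[OF finite_vecs jj_lt])
  finally show ?thesis .
qed


lemma sum8: "(\<Sum>k<8. h k) = h 0 + h 1 + h 2 + h 3 + h 4 + h 5 + h 6 + h 7"
  for h :: "nat \<Rightarrow> 'a::comm_monoid_add"
  by (simp add: eval_nat_numeral lessThan_Suc ac_simps)

lemma W_all:
  fixes a1 a2 a3 a4 :: "bool list \<Rightarrow> bool"
  shows
 "walsh n a4 u = of_int (X0 (MM n a1 a2 a3 a4 u))"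
 "walsh n (\<lambda>x. bxor (a2 x) (a4 x)) u = of_int (X2 (MM n a1 a2 a3 a4 u))"
 "walsh n (\<lambda>x. bxor (a3 x) (a4 x)) u = of_int (X3 (MM n a1 a2 a3 a4 u))"
 "walsh n (\<lambda>x. bxor (bxor (a2 x) (a3 x)) (a4 x)) u = of_int (X23 (MM n a1 a2 a3 a4 u))"
 "walsh n (\<lambda>x. bxor (a1 x) (a4 x)) u = of_int (X1 (MM n a1 a2 a3 a4 u))"
 "walsh n (\<lambda>x. bxor (bxor (a1 x) (a2 x)) (a4 x)) u = of_int (X12 (MM n a1 a2 a3 a4 u))"
 "walsh n (\<lambda>x. bxor (bxor (a1 x) (a3 x)) (a4 x)) u = of_int (X13 (MM n a1 a2 a3 a4 u))"
 "walsh n (\<lambda>x. bxor (bxor (bxor (a1 x) (a2 x)) (a3 x)) (a4 x)) u = of_int (X123 (MM n a1 a2 a3 a4 u))"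
proof -
  have e: "walsh n a4 u = walsh n (\<lambda>x. bxor ((\<lambda>b1 b2 b3. False) (a1 x) (a2 x) (a3 x)) (a4 x)) u" by (simp add: bxor_def)
  show "walsh n a4 u = of_int (X0 (MM n a1 a2 a3 a4 u))"
    unfolding e apply (subst w_MM[where pa=a1 and pb=a2 and pc=a3 and pd=a4]) apply (simp only: sum8)
    by (simp add: X0_def)
  show "walsh n (\<lambda>x. bxor (a2 x) (a4 x)) u = of_int (X2 (MM n a1 a2 a3 a4 u))"
    apply (subst w_MM[where G="\<lambda>b1 b2 b3. b2" and pa=a1 and pb=a2 and pc=a3 and pd=a4])
    apply (simp only: sum8)
    by (simp add: X2_def)
  show "walsh n (\<lambda>x. bxor (a3 x) (a4 x)) u = of_int (X3 (MM n a1 a2 a3 a4 u))"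
    apply (subst w_MM[where G="\<lambda>b1 b2 b3. b3" and pa=a1 and pb=a2 and pc=a3 and pd=a4])
    apply (simp only: sum8)
    by (simp add: X3_def)
  show "walsh n (\<lambda>x. bxor (bxor (a2 x) (a3 x)) (a4 x)) u = of_int (X23 (MM n a1 a2 a3 a4 u))"
    apply (subst w_MM[where G="\<lambda>b1 b2 b3. bxor b2 b3" and pa=a1 and pb=a2 and pc=a3 and pd=a4])
    apply (simp only: sum8)
    by (simp add: X23_def bxor_def)
  show "walsh n (\<lambda>x. bxor (a1 x) (a4 x)) u = of_int (X1 (MM n a1 a2 a3 a4 u))"
    apply (subst w_MM[where G="\<lambda>b1 b2 b3. b1" and pa=a1 and pb=a2 and pc=a3 and pd=a4])
    apply (simp only: sum8)
    by (simp add: X1_def)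
  show "walsh n (\<lambda>x. bxor (bxor (a1 x) (a2 x)) (a4 x)) u = of_int (X12 (MM n a1 a2 a3 a4 u))"
    apply (subst w_MM[where G="\<lambda>b1 b2 b3. bxor b1 b2" and pa=a1 and pb=a2 and pc=a3 and pd=a4])
    apply (simp only: sum8)
    by (simp add: X12_def bxor_def)
  show "walsh n (\<lambda>x. bxor (bxor (a1 x) (a3 x)) (a4 x)) u = of_int (X13 (MM n a1 a2 a3 a4 u))"
    apply (subst w_MM[where G="\<lambda>b1 b2 b3. bxor b1 b3" and pa=a1 and pb=a2 and pc=a3 and pd=a4])
    apply (simp only: sum8)
    by (simp add: X13_def bxor_def)
  show "walsh n (\<lambda>x. bxor (bxor (bxor (a1 x) (a2 x)) (a3 x)) (a4 x)) u = of_int (X123 (MM n a1 a2 a3 a4 u))"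
    apply (subst w_MM[where G="\<lambda>b1 b2 b3. bxor (bxor b1 b2) b3" and pa=a1 and pb=a2 and pc=a3 and pd=a4])
    apply (simp only: sum8)
    by (simp add: X123_def bxor_def)
qed

definition XC :: "bool \<Rightarrow> bool \<Rightarrow> bool \<Rightarrow> (nat \<Rightarrow> int) \<Rightarrow> int" where
  "XC c1 c2 c3 v = (if c1 then (if c2 then (if c3 then X123 v else X12 v) else (if c3 then X13 v else X1 v))
     else (if c2 then (if c3 then X23 v else X2 v) else (if c3 then X3 v else X0 v)))"

lemma Wc:
  fixes a1 a2 a3 a4 :: "bool list \<Rightarrow> bool"
  shows "walsh n (\<lambda>x. bxor (bxor (bxor (c1 \<and> a1 x) (c2 \<and> a2 x)) (c3 \<and> a3 x)) (a4 x)) u = of_int (XC c1 c2 c3 (MM n a1 a2 a3 a4 u))"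
  apply (subst w_MM[where G="\<lambda>b1 b2 b3. bxor (bxor (c1 \<and> b1) (c2 \<and> b2)) (c3 \<and> b3)" and pa=a1 and pb=a2 and pc=a3 and pd=a4])
  by (cases c1; cases c2; cases c3) (simp_all add: sum8 XC_def
        X0_def X1_def X2_def X12_def X3_def X13_def X23_def X123_def bxor_def)


lemma ri_mult_eq: "real_of_int a * real_of_int b = real_of_int c * real_of_int d \<longleftrightarrow> a*b = c*d"
  by (metis of_int_eq_iff of_int_mult)
lemma ri_mult_eq2: "real_of_int a * real_of_int b = real_of_int c \<longleftrightarrow> a*b = c"
  by (metis of_int_eq_iff of_int_mult)
lemma ri_mult_eq3: "real_of_int a * real_of_int b = - real_of_int c \<longleftrightarrow> a*b = - c"
  by (metis of_int_eq_iff of_int_mult of_int_minus)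
lemma ri_abs: "\<bar>real_of_int a\<bar> = real_of_int c \<longleftrightarrow> \<bar>a\<bar> = c"
  by (metis of_int_eq_iff of_int_abs)
lemma ri_abs0: "\<bar>real_of_int a\<bar> = 0 \<longleftrightarrow> \<bar>a\<bar> = 0"
  by simp
lemma ri_0: "real_of_int a = 0 \<longleftrightarrow> a = 0"
  by simp

theorem mainTheorem7:
  fixes n :: nat and a1 a2 a3 a4 :: "bool list \<Rightarrow> bool"
  defines "f \<equiv> (\<lambda>x. (of_bool (a1 x) + 2 * of_bool (a2 x) + 4 * of_bool (a3 x) + 8 * of_bool (a4 x)) mod 16 :: nat)"
  defines "W \<equiv> (\<lambda>g. walsh n g)"
  shows "gbent 16 n f \<longleftrightarrow>
    (if even n then
       (\<forall>c1 c2 c3. bent n (\<lambda>x. bxor (bxor (bxor (c1 \<and> a1 x) (c2 \<and> a2 x)) (c3 \<and> a3 x)) (a4 x)))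
       \<and> (\<forall>u\<in>vecs n.
            W a4 u * W (\<lambda>x. bxor (a2 x) (a4 x)) u
              = W (\<lambda>x. bxor (a3 x) (a4 x)) u * W (\<lambda>x. bxor (bxor (a2 x) (a3 x)) (a4 x)) u
          \<and> W (\<lambda>x. bxor (a3 x) (a4 x)) u * W (\<lambda>x. bxor (bxor (a2 x) (a3 x)) (a4 x)) u
              = W (\<lambda>x. bxor (a1 x) (a4 x)) u * W (\<lambda>x. bxor (bxor (a1 x) (a2 x)) (a4 x)) u
          \<and> W (\<lambda>x. bxor (a1 x) (a4 x)) u * W (\<lambda>x. bxor (bxor (a1 x) (a2 x)) (a4 x)) u
              = W (\<lambda>x. bxor (bxor (a1 x) (a3 x)) (a4 x)) u
                * W (\<lambda>x. bxor (bxor (bxor (a1 x) (a2 x)) (a3 x)) (a4 x)) u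
          \<and> W a4 u * W (\<lambda>x. bxor (a3 x) (a4 x)) u
              = W (\<lambda>x. bxor (a1 x) (a4 x)) u * W (\<lambda>x. bxor (bxor (a1 x) (a3 x)) (a4 x)) u)
     else
       (\<forall>c1 c2 c3. semibent n (\<lambda>x. bxor (bxor (bxor (c1 \<and> a1 x) (c2 \<and> a2 x)) (c3 \<and> a3 x)) (a4 x)))
       \<and> (\<forall>u\<in>vecs n.
            (W a4 u * W (\<lambda>x. bxor (a2 x) (a4 x)) u
               = W (\<lambda>x. bxor (a1 x) (a4 x)) u * W (\<lambda>x. bxor (bxor (a1 x) (a2 x)) (a4 x)) u
             \<and> (W a4 u * W (\<lambda>x. bxor (a2 x) (a4 x)) u = 2 ^ (n + 1)
                \<or> W a4 u * W (\<lambda>x. bxor (a2 x) (a4 x)) u = - (2 ^ (n + 1)))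
             \<and> W (\<lambda>x. bxor (a3 x) (a4 x)) u = 0
             \<and> W (\<lambda>x. bxor (bxor (a2 x) (a3 x)) (a4 x)) u = 0
             \<and> W (\<lambda>x. bxor (bxor (a1 x) (a3 x)) (a4 x)) u = 0
             \<and> W (\<lambda>x. bxor (bxor (bxor (a1 x) (a2 x)) (a3 x)) (a4 x)) u = 0)
          \<or> (W a4 u = 0
             \<and> W (\<lambda>x. bxor (a2 x) (a4 x)) u = 0
             \<and> W (\<lambda>x. bxor (a1 x) (a4 x)) u = 0
             \<and> W (\<lambda>x. bxor (bxor (a1 x) (a2 x)) (a4 x)) u = 0
             \<and> W (\<lambda>x. bxor (a3 x) (a4 x)) u * W (\<lambda>x. bxor (bxor (a2 x) (a3 x)) (a4 x)) u
                 = W (\<lambda>x. bxor (bxor (a1 x) (a3 x)) (a4 x)) u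
                   * W (\<lambda>x. bxor (bxor (bxor (a1 x) (a2 x)) (a3 x)) (a4 x)) u
             \<and> (W (\<lambda>x. bxor (a3 x) (a4 x)) u * W (\<lambda>x. bxor (bxor (a2 x) (a3 x)) (a4 x)) u = 2 ^ (n + 1)
                \<or> W (\<lambda>x. bxor (a3 x) (a4 x)) u * W (\<lambda>x. bxor (bxor (a2 x) (a3 x)) (a4 x)) u = - (2 ^ (n + 1))))))"
proof -
  define K where "K = (2::int)^(n div 2)"
  have Wr: "\<And>u. W a4 u = of_int (X0 (MM n a1 a2 a3 a4 u))"
   "\<And>u. W (\<lambda>x. bxor (a2 x) (a4 x)) u = of_int (X2 (MM n a1 a2 a3 a4 u))"
   "\<And>u. W (\<lambda>x. bxor (a3 x) (a4 x)) u = of_int (X3 (MM n a1 a2 a3 a4 u))"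
   "\<And>u. W (\<lambda>x. bxor (bxor (a2 x) (a3 x)) (a4 x)) u = of_int (X23 (MM n a1 a2 a3 a4 u))"
   "\<And>u. W (\<lambda>x. bxor (a1 x) (a4 x)) u = of_int (X1 (MM n a1 a2 a3 a4 u))"
   "\<And>u. W (\<lambda>x. bxor (bxor (a1 x) (a2 x)) (a4 x)) u = of_int (X12 (MM n a1 a2 a3 a4 u))"
   "\<And>u. W (\<lambda>x. bxor (bxor (a1 x) (a3 x)) (a4 x)) u = of_int (X13 (MM n a1 a2 a3 a4 u))"
   "\<And>u. W (\<lambda>x. bxor (bxor (bxor (a1 x) (a2 x)) (a3 x)) (a4 x)) u = of_int (X123 (MM n a1 a2 a3 a4 u))"
    unfolding W_def by (rule W_all)+
  have swap: "\<And>A B. ((\<forall>c1 c2 c3. \<forall>u\<in>vecs n. A c1 c2 c3 u) \<and> (\<forall>u\<in>vecs n. B u)) \<longleftrightarrow>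
     (\<forall>u\<in>vecs n. (\<forall>c1 c2 c3. A c1 c2 c3 u) \<and> B u)" by blast
  have gb: "gbent 16 n f \<longleftrightarrow> (\<forall>u\<in>vecs n. DD n (MM n a1 a2 a3 a4 u))"
    unfolding gbent_def f_def gw_MM HH_DD ..
  show ?thesis
  proof (cases "even n")
    case True
    then obtain k where k: "n = 2*k" by blast
    have P: "2 powr (real n / 2) = real_of_int K"
      unfolding K_def using k by (simp add: powr_realpow)
    have R: "(\<forall>c1 c2 c3. bent n (\<lambda>x. bxor (bxor (bxor (c1 \<and> a1 x) (c2 \<and> a2 x)) (c3 \<and> a3 x)) (a4 x)))
       \<and> (\<forall>u\<in>vecs n.
            W a4 u * W (\<lambda>x. bxor (a2 x) (a4 x)) u
              = W (\<lambda>x. bxor (a3 x) (a4 x)) u * W (\<lambda>x. bxor (bxor (a2 x) (a3 x)) (a4 x)) u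
          \<and> W (\<lambda>x. bxor (a3 x) (a4 x)) u * W (\<lambda>x. bxor (bxor (a2 x) (a3 x)) (a4 x)) u
              = W (\<lambda>x. bxor (a1 x) (a4 x)) u * W (\<lambda>x. bxor (bxor (a1 x) (a2 x)) (a4 x)) u
          \<and> W (\<lambda>x. bxor (a1 x) (a4 x)) u * W (\<lambda>x. bxor (bxor (a1 x) (a2 x)) (a4 x)) u
              = W (\<lambda>x. bxor (bxor (a1 x) (a3 x)) (a4 x)) u
                * W (\<lambda>x. bxor (bxor (bxor (a1 x) (a2 x)) (a3 x)) (a4 x)) u
          \<and> W a4 u * W (\<lambda>x. bxor (a3 x) (a4 x)) u
              = W (\<lambda>x. bxor (a1 x) (a4 x)) u * W (\<lambda>x. bxor (bxor (a1 x) (a3 x)) (a4 x)) u)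
      \<longleftrightarrow> (\<forall>u\<in>vecs n. EvenR K (MM n a1 a2 a3 a4 u))"
      unfolding bent_def Wc Wr P ri_mult_eq ri_abs EvenR_def all_bool_eq XC_def if_True if_False
      by blast
    have "gbent 16 n f \<longleftrightarrow> (\<forall>u\<in>vecs n. EvenR K (MM n a1 a2 a3 a4 u))"
      unfolding gb K_def using DD_even[OF True] by simp
    with R True show ?thesis by simp
  next
    case False
    then obtain k where k: "n = 2*k+1" using oddE by blast
    have kd: "n div 2 = k" using k by simp
    have oddn: "odd n" using False by simp
    have P: "2 powr ((real n + 1) / 2) = real_of_int (2*K)"
    proof -
      have e: "(real n + 1) / 2 = real (k+1)" using k by simp
      have "2 powr ((real n + 1) / 2) = 2 powr (real (k+1))" by (simp only: e)
      also have "\<dots> = 2 ^ (k+1)" by (rule powr_realpow) simp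
      finally show ?thesis unfolding K_def kd by simp
    qed
    have P2: "(2::real) ^ (n + 1) = real_of_int (4*K^2)"
      unfolding K_def kd k by (simp add: power_add power_mult[symmetric] mult.commute)
    have R: "(\<forall>c1 c2 c3. semibent n (\<lambda>x. bxor (bxor (bxor (c1 \<and> a1 x) (c2 \<and> a2 x)) (c3 \<and> a3 x)) (a4 x)))
       \<and> (\<forall>u\<in>vecs n.
            (W a4 u * W (\<lambda>x. bxor (a2 x) (a4 x)) u
               = W (\<lambda>x. bxor (a1 x) (a4 x)) u * W (\<lambda>x. bxor (bxor (a1 x) (a2 x)) (a4 x)) u
             \<and> (W a4 u * W (\<lambda>x. bxor (a2 x) (a4 x)) u = 2 ^ (n + 1)
                \<or> W a4 u * W (\<lambda>x. bxor (a2 x) (a4 x)) u = - (2 ^ (n + 1)))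
             \<and> W (\<lambda>x. bxor (a3 x) (a4 x)) u = 0
             \<and> W (\<lambda>x. bxor (bxor (a2 x) (a3 x)) (a4 x)) u = 0
             \<and> W (\<lambda>x. bxor (bxor (a1 x) (a3 x)) (a4 x)) u = 0
             \<and> W (\<lambda>x. bxor (bxor (bxor (a1 x) (a2 x)) (a3 x)) (a4 x)) u = 0)
          \<or> (W a4 u = 0
             \<and> W (\<lambda>x. bxor (a2 x) (a4 x)) u = 0
             \<and> W (\<lambda>x. bxor (a1 x) (a4 x)) u = 0
             \<and> W (\<lambda>x. bxor (bxor (a1 x) (a2 x)) (a4 x)) u = 0
             \<and> W (\<lambda>x. bxor (a3 x) (a4 x)) u * W (\<lambda>x. bxor (bxor (a2 x) (a3 x)) (a4 x)) u
                 = W (\<lambda>x. bxor (bxor (a1 x) (a3 x)) (a4 x)) u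
                   * W (\<lambda>x. bxor (bxor (bxor (a1 x) (a2 x)) (a3 x)) (a4 x)) u
             \<and> (W (\<lambda>x. bxor (a3 x) (a4 x)) u * W (\<lambda>x. bxor (bxor (a2 x) (a3 x)) (a4 x)) u = 2 ^ (n + 1)
                \<or> W (\<lambda>x. bxor (a3 x) (a4 x)) u * W (\<lambda>x. bxor (bxor (a2 x) (a3 x)) (a4 x)) u = - (2 ^ (n + 1)))))
      \<longleftrightarrow> (\<forall>u\<in>vecs n. OddR K (MM n a1 a2 a3 a4 u))"
      unfolding semibent_def swap
      apply (rule ball_cong[OF refl])
      unfolding Wc Wr P P2
      apply (simp only: oddn if_True insert_iff empty_iff simp_thms ri_mult_eq ri_mult_eq2 ri_mult_eq3
         ri_abs ri_abs0 ri_0 OddR_def all_bool_eq XC_def if_False)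
      by argo
    have "gbent 16 n f \<longleftrightarrow> (\<forall>u\<in>vecs n. OddR K (MM n a1 a2 a3 a4 u))"
      unfolding gb K_def using DD_odd[OF False] by simp
    with R False show ?thesis by simp
  qed
qed


end
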